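(* Let $\mathcal G=(\mathcal V,\mathcal E,W)$ be a network, $h\in\mathbb{R}^{\mathcal V}$, and consider the SNC game with binary actions on $\mathcal G$ with external field $h$, with set of Nash equilibria $\mathcal N$. Let $\mathcal V=\mathcal R\cup\mathcal S$, $\mathcal R\cap\mathcal S=\emptyset$, be a binary partition such that $\mathcal G_{\mathcal R}$ is structurally balanced and $\mathcal G_{\mathcal S}$ is undirected. If there exists $\tau\in\{\pm1\}^{\mathcal R}$ such that $\tau_iW_{ij}\tau_j\ge0$ for all $i,j\in\mathcal R$ and $w_i^{\mathcal R}+\tau_ih_i\ge w_i^{\mathcal S}$ for all $i\in\mathcal R$, then there exists a Nash equilibrium $x^*\in\mathcal N$ with $x^*_{\mathcal R}=\tau$.
   Context: A network is a triple $\mathcal G=(\mathcal V,\mathcal E,W)$ where $\mathcal V$ is a finite nonempty set, $\mathcal E\subseteq\mathcal V\times\mathcal V$, and $W\in\mathbb{R}^{\mathcal V\times\mathcal V}$ has zero diagonal and satisfies $W_{ij}\neq0$ iff $(i,j)\in\mathcal E$ (weights may have either sign). It is undirected if its weight matrix is symmetric. For $\mathcal U\subseteq\mathcal V$, the subnetwork $\mathcal G_{\mathcal U}$ has node set $\mathcal U$, links $\mathcal E\cap(\mathcal U\times\mathcal U)$ and weight matrix $W_{\mathcal U\mathcal U}$. A network is structurally balanced if its node set can be written as a disjoint union of two sets with nonnegative weights on links within each set and nonpositive weights on links between the two sets. For $i\in\mathcal V$ and $\mathcal B\subseteq\mathcal V$, $w_i^{\mathcal B}=\sum_{j\in\mathcal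 B}|W_{ij}|$. The SNC game with binary actions on $\mathcal G$ with external field $h\in\mathbb{R}^{\mathcal V}$ has player set $\mathcal V$, action set $\{-1,+1\}$ for each player, strategy profiles $\mathcal X=\{\pm1\}^{\mathcal V}$, and utilities $u_i(x)=h_ix_i+x_i\sum_{j\in\mathcal V}W_{ij}x_j$. A Nash equilibrium is $x^*$ with $x^*_i\in\arg\max_{a\in\{\pm1\}}u_i(a,x^*_{-i})$ for all $i$. *)

theory Defs
  imports Complex_Main "HOL-Library.FuncSet"
begin

definition network :: "'a set \<Rightarrow> ('a \<times> 'a) set \<Rightarrow> ('a \<Rightarrow> 'a \<Rightarrow> real) \<Rightarrow> bool" where
  "network V E W \<longleftrightarrow> finite V \<and> V \<noteq> {} \<and> E \<subseteq> V \<times> V \<and>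
     (\<forall>i\<in>V. W i i = 0) \<and> (\<forall>i\<in>V. \<forall>j\<in>V. W i j \<noteq> 0 \<longleftrightarrow> (i, j) \<in> E)"

definition undirected_on :: "'a set \<Rightarrow> ('a \<Rightarrow> 'a \<Rightarrow> real) \<Rightarrow> bool" where
  "undirected_on U W \<longleftrightarrow> (\<forall>i\<in>U. \<forall>j\<in>U. W i j = W j i)"

definition structurally_balanced_on :: "'a set \<Rightarrow> ('a \<Rightarrow> 'a \<Rightarrow> real) \<Rightarrow> bool" where
  "structurally_balanced_on U W \<longleftrightarrow>
     (\<exists>A B. A \<union> B = U \<and> A \<inter> B = {} \<and>
        (\<forall>i\<in>A. \<forall>j\<in>A. W i j \<ge> 0) \<and> (\<forall>i\<in>B. \<forall>j\<in>B. W i j \<ge> 0) \<and>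
        (\<forall>i\<in>A. \<forall>j\<in>B. W i j \<le> 0 \<and> W j i \<le> 0))"

definition wsum :: "('a \<Rightarrow> 'a \<Rightarrow> real) \<Rightarrow> 'a \<Rightarrow> 'a set \<Rightarrow> real" where
  "wsum W i B = (\<Sum>j\<in>B. \<bar>W i j\<bar>)"

definition profiles :: "'a set \<Rightarrow> ('a \<Rightarrow> real) set" where
  "profiles V = V \<rightarrow>\<^sub>E {-1, 1}"

definition utility :: "'a set \<Rightarrow> ('a \<Rightarrow> 'a \<Rightarrow> real) \<Rightarrow> ('a \<Rightarrow> real) \<Rightarrow> 'a \<Rightarrow> ('a \<Rightarrow> real) \<Rightarrow> real" where
  "utility V W h i x = h i * x i + x i * (\<Sum>j\<in>V. W i j * x j)"

definition nash_eq :: "'a set \<Rightarrow> ('a \<Rightarrow> 'a \<Rightarrow> real) \<Rightarrow> ('a \<Rightarrow> real) \<Rightarrow> ('a \<Rightarrow> real) \<Rightarrow> bool" where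
  "nash_eq V W h x \<longleftrightarrow> x \<in> profiles V \<and>
     (\<forall>i\<in>V. \<forall>a\<in>{-1, 1::real}. utility V W h i (x(i := a)) \<le> utility V W h i x)"

end

theory Submission
  imports Defs
begin

lemma quad:
  fixes W :: "'a \<Rightarrow> 'a \<Rightarrow> real"
  assumes "finite S" "k \<in> S" "\<forall>i\<in>S. \<forall>j\<in>S. W i j = W j i" "W k k = 0"
  shows "(\<Sum>i\<in>S. \<Sum>j\<in>S. W i j * (y(k:=a)) i * (y(k:=a)) j)
       = (\<Sum>i\<in>S. \<Sum>j\<in>S. W i j * y i * y j) + 2 * (a - y k) * (\<Sum>j\<in>S. W k j * y j)"
proof -
  define d where "d = a - y k"
  have e: "y(k:=a) = (\<lambda>j. y j + (if j = k then d else 0))" by (auto simp: d_def)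
  have "(\<Sum>i\<in>S. \<Sum>j\<in>S. W i j * (y(k:=a)) i * (y(k:=a)) j)
     = (\<Sum>i\<in>S. \<Sum>j\<in>S. W i j * y i * y j) + (\<Sum>i\<in>S. \<Sum>j\<in>S. (if i = k then d * W i j * y j else 0))
       + (\<Sum>i\<in>S. \<Sum>j\<in>S. (if j = k then d * W i j * y i else 0))
       + (\<Sum>i\<in>S. \<Sum>j\<in>S. (if i = k \<and> j = k then d * d * W i j else 0))"
    unfolding e sum.distrib[symmetric] by (intro sum.cong refl) (auto simp: algebra_simps)
  also have "\<dots> = (\<Sum>i\<in>S. \<Sum>j\<in>S. W i j * y i * y j) + d * (\<Sum>j\<in>S. W k j * y j)
       + d * (\<Sum>i\<in>S. W i k * y i)"
  proof -
    have 1: "(\<Sum>i\<in>S. \<Sum>j\<in>S. (if i = k then d * W i j * y j else 0)) = d * (\<Sum>j\<in>S. W k j * y j)"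
      using assms(1,2) by (simp add: sum.swap[of _ S S] sum_distrib_left mult.assoc)
    have 2: "(\<Sum>i\<in>S. \<Sum>j\<in>S. (if j = k then d * W i j * y i else 0)) = d * (\<Sum>i\<in>S. W i k * y i)"
      using assms(1,2) by (simp add: sum_distrib_left mult.assoc)
    have 3: "(\<Sum>i\<in>S. \<Sum>j\<in>S. (if i = k \<and> j = k then d * d * W i j else 0)) = 0"
      proof -
      have "\<And>i. (\<Sum>j\<in>S. (if i = k \<and> j = k then d * d * W i j else 0)) = 0"
        using assms(1,2,4) by (auto intro: sum.neutral)
      then show ?thesis by simp
    qed
    show ?thesis using 1 2 3 by simp
  qed
  also have "(\<Sum>i\<in>S. W i k * y i) = (\<Sum>j\<in>S. W k j * y j)"
    using assms by (intro sum.cong) auto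
  finally show ?thesis by (simp add: d_def algebra_simps)
qed

lemma lin:
  fixes c :: "'a \<Rightarrow> real"
  assumes "finite S" "k \<in> S"
  shows "(\<Sum>j\<in>S. c j * (y(k:=a)) j) = (\<Sum>j\<in>S. c j * y j) + c k * (a - y k)"
proof -
  have "(\<Sum>j\<in>S. c j * (y(k:=a)) j) = (\<Sum>j\<in>S. c j * y j + (if j = k then c k * (a - y k) else 0))"
    by (intro sum.cong) (auto simp: algebra_simps)
  then show ?thesis using assms by (simp add: sum.distrib)
qed

theorem corollary2:
  fixes V R S :: "'a set" and E :: "('a \<times> 'a) set"
    and W :: "'a \<Rightarrow> 'a \<Rightarrow> real" and h \<tau> :: "'a \<Rightarrow> real"
  assumes "network V E W"
    and "R \<union> S = V" and "R \<inter> S = {}"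
    and "structurally_balanced_on R W"
    and "undirected_on S W"
    and "\<forall>i\<in>R. \<tau> i \<in> {-1, 1}"
    and "\<forall>i\<in>R. \<forall>j\<in>R. \<tau> i * W i j * \<tau> j \<ge> 0"
    and "\<forall>i\<in>R. wsum W i R + \<tau> i * h i \<ge> wsum W i S"
  shows "\<exists>x. nash_eq V W h x \<and> (\<forall>i\<in>R. x i = \<tau> i)"
proof -
  have finV: "finite V" and diag: "\<forall>i\<in>V. W i i = 0" using assms(1) unfolding network_def by auto
  have finR: "finite R" and finS: "finite S" using finV assms(2) by (auto intro: finite_subset)
  have sym: "\<forall>i\<in>S. \<forall>j\<in>S. W i j = W j i" using assms(5) unfolding undirected_on_def by auto
  define c where "c i = h i + (\<Sum>j\<in>R. W i j * \<tau> j)" for i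
  define \<Phi> where "\<Phi> y = (\<Sum>j\<in>S. (2 * c j) * y j) + (\<Sum>i\<in>S. \<Sum>j\<in>S. W i j * y i * y j)" for y :: "'a \<Rightarrow> real"
  define P where "P = profiles S"
  have finP: "finite P" unfolding P_def profiles_def by (intro finite_PiE finS) auto
  have neP: "P \<noteq> {}" unfolding P_def profiles_def by (auto simp: PiE_eq_empty_iff)
  obtain y where yP: "y \<in> P" and ymax: "\<And>z. z \<in> P \<Longrightarrow> \<Phi> z \<le> \<Phi> y"
  proof -
    have "Max (\<Phi> ` P) \<in> \<Phi> ` P" using finP neP by simp
    then obtain y where "y \<in> P" "\<Phi> y = Max (\<Phi> ` P)" by auto
    moreover have "\<And>z. z \<in> P \<Longrightarrow> \<Phi> z \<le> Max (\<Phi> ` P)" using finP by simp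
    ultimately show ?thesis using that by metis
  qed
  define x where "x i = (if i \<in> R then \<tau> i else y i)" for i
  have xR: "\<forall>i\<in>R. x i = \<tau> i" by (simp add: x_def)
  have xS: "\<forall>i\<in>S. x i = y i" using assms(3) by (auto simp: x_def)
  have yv: "\<forall>i\<in>S. y i \<in> {-1,1}" using yP unfolding P_def profiles_def by auto
  have xprof: "x \<in> profiles V"
    using yP yv assms(2,3,6) unfolding P_def profiles_def x_def PiE_def extensional_def Pi_def by auto
  have split: "(\<Sum>j\<in>V. f j) = (\<Sum>j\<in>R. f j) + (\<Sum>j\<in>S. f j)" for f :: "'a \<Rightarrow> real"
    using assms(2,3) finR finS by (metis sum.union_disjoint)
  have T: "(\<Sum>j\<in>V. W i j * x j) = (\<Sum>j\<in>R. W i j * \<tau> j) + (\<Sum>j\<in>S. W i j * y j)" for i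
    using split[of "\<lambda>j. W i j * x j"] xR xS by simp
  have main: "(a - x i) * (h i + (\<Sum>j\<in>V. W i j * x j)) \<le> 0" if iV: "i \<in> V" and a: "a \<in> {-1,1}" for i a
  proof (cases "i \<in> R")
    case True
    have ti: "\<tau> i \<in> {-1,1}" using assms(6) True by auto
    have t2: "\<tau> i * \<tau> i = 1" using ti by auto
    have sR: "(\<Sum>j\<in>R. \<tau> i * (W i j * \<tau> j)) = wsum W i R"
      unfolding wsum_def
    proof (intro sum.cong refl)
      fix j assume j: "j \<in> R"
      have "\<tau> i * W i j * \<tau> j \<ge> 0" using assms(7) True j by auto
      moreover have "\<bar>\<tau> i * W i j * \<tau> j\<bar> = \<bar>W i j\<bar>" using ti assms(6) j by (auto simp: abs_mult)
      ultimately show "\<tau> i * (W i j * \<tau> j) = \<bar>W i j\<bar>" by (simp add: mult.assoc)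
    qed
    have sS: "(\<Sum>j\<in>S. \<tau> i * (W i j * y j)) \<ge> - wsum W i S"
      unfolding wsum_def sum_negf[symmetric]
    proof (intro sum_mono)
      fix j assume j: "j \<in> S"
      have "\<bar>\<tau> i * (W i j * y j)\<bar> = \<bar>W i j\<bar>" using ti yv j by (auto simp: abs_mult)
      then show "- \<bar>W i j\<bar> \<le> \<tau> i * (W i j * y j)" by linarith
    qed
    have pos: "\<tau> i * (h i + (\<Sum>j\<in>V. W i j * x j)) \<ge> 0"
      proof -
      have "\<tau> i * (h i + (\<Sum>j\<in>V. W i j * x j)) = \<tau> i * h i + (\<Sum>j\<in>R. \<tau> i * (W i j * \<tau> j)) + (\<Sum>j\<in>S. \<tau> i * (W i j * y j))"
        using T[of i] by (simp add: algebra_simps sum_distrib_left)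
      then show ?thesis using sR sS assms(8) True by auto
    qed
    show ?thesis
    proof (cases "a = x i")
      case False
      then have "a = - \<tau> i" using a ti xR True by auto
      then have "(a - x i) = -2 * \<tau> i" using xR True by simp
      then show ?thesis using pos by (simp add: mult.assoc)
    qed simp
  next
    case False
    then have iS: "i \<in> S" using iV assms(2) by auto
    have zP: "y(i:=a) \<in> P" using yP yv a iS unfolding P_def profiles_def by (auto simp: PiE_def extensional_def Pi_def)
    have Wii: "W i i = 0" using diag iV by auto
    have "\<Phi> (y(i:=a)) = \<Phi> y + 2 * c i * (a - y i) + 2 * (a - y i) * (\<Sum>j\<in>S. W i j * y j)"
      unfolding \<Phi>_def using lin[OF finS iS, of "\<lambda>j. 2 * c j" y a] quad[OF finS iS sym Wii, of y a]
      by simp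
    then have "(a - y i) * (c i + (\<Sum>j\<in>S. W i j * y j)) \<le> 0" using ymax[OF zP] by (simp add: algebra_simps)
    then show ?thesis using T[of i] xS iS by (simp add: c_def add.assoc)
  qed
  have "nash_eq V W h x"
    unfolding nash_eq_def
  proof (intro conjI xprof ballI)
    fix i a assume iV: "i \<in> V" and a: "a \<in> {-1, 1::real}"
    have Wii: "W i i = 0" using diag iV by auto
    have "(\<Sum>j\<in>V. W i j * (x(i:=a)) j) = (\<Sum>j\<in>V. W i j * x j)"
      using Wii by (intro sum.cong) auto
    then have "utility V W h i (x(i := a)) - utility V W h i x = (a - x i) * (h i + (\<Sum>j\<in>V. W i j * x j))"
      unfolding utility_def by (simp add: algebra_simps)
    then show "utility V W h i (x(i := a)) \<le> utility V W h i x" using main[OF iV a] by simp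
  qed
  then show ?thesis using xR by blast
qed

end
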